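(* For every integer $p\ge0$, $$\sum_{k=1}^\infty\frac{(-1)^k}{(2k-1)(2k)^p(2k+1)}=\begin{cases}\dfrac12-\dfrac{\pi}{4}+\displaystyle\sum_{j=1}^{p/2}2^{-2j}\eta(2j), & p\text{ even},\\[8pt] -\dfrac12+\dfrac{\ln 2}{2}+\displaystyle\sum_{j=1}^{(p-1)/2}2^{-(2j+1)}\eta(2j+1), & p\text{ odd},\end{cases}$$ where empty sums are $0$.
   Context: $\eta(s)=\sum_{k\ge1}(-1)^{k+1}k^{-s}$ ($\operatorname{Re}s>0$) is the Dirichlet eta function. *)

theory Defs
  imports "HOL-Analysis.Analysis"
begin

text \<open>Dirichlet eta function for real s > 0:
  eta s = sum over k >= 1 of (-1)^(k+1) k^(-s); here indexed by n = k - 1.\<close>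
definition dirichlet_eta :: "real \<Rightarrow> real" where
  "dirichlet_eta s = (\<Sum>n. (-1) ^ n / (real (Suc n)) powr s)"

end

theory Submission
  imports Defs "HOL-Real_Asymp.Real_Asymp"
begin

lemma leib_sums: "(\<lambda>k. (-1)^k / real (2*k+1)) sums (pi/4)"
proof -
  have s: "summable (\<lambda>k. (-1)^k * (1 / real (2*k+1)))"
  proof (rule summable_Leibniz')
    show "(\<lambda>k. 1 / real (2*k+1)) \<longlonglongrightarrow> 0"
      by real_asymp
    show "\<And>n. 0 \<le> 1 / real (2 * n + 1)" by simp
    show "\<And>n. 1 / real (2 * Suc n + 1) \<le> 1 / real (2 * n + 1)"
      by (simp add: frac_le)
  qed
  have e: "pi/4 = (\<Sum>k. (-1)^k / real (2*k+1))"
    using pi_series by (simp add: mult.commute)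
  have "summable (\<lambda>k. (-1)^k / real (2*k+1))" using s by simp
  from summable_sums[OF this] show ?thesis by (simp only: e[symmetric])
qed

lemma eta_sums:
  assumes "q \<ge> 2"
  shows "(\<lambda>n. (-1)^n / real (Suc n) ^ q) sums dirichlet_eta (real q)"
proof -
  have s: "summable (\<lambda>n. (-1)^n / real (Suc n) ^ q)"
  proof (rule summable_norm_cancel, rule summable_comparison_test)
    show "\<exists>N. \<forall>n\<ge>N. norm (norm ((-1)^n / real (Suc n) ^ q)) \<le> 1 / real (Suc n) ^ 2"
      using assms by (auto intro!: exI[of _ 0] simp: power_abs frac_le power_increasing)
    show "summable (\<lambda>n. 1 / real (Suc n) ^ 2)"
      using inverse_squares_sums by (simp add: sums_iff add.commute)
  qed
  have "dirichlet_eta (real q) = (\<Sum>n. (-1)^n / real (Suc n) ^ q)"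
    unfolding dirichlet_eta_def by (simp add: powr_realpow)
  then show ?thesis using s by (simp add: summable_sums)
qed

definition ff :: "nat \<Rightarrow> nat \<Rightarrow> real" where
  "ff p n = (-1) ^ Suc n /
            ((2 * real (Suc n) - 1) * (2 * real (Suc n)) ^ p * (2 * real (Suc n) + 1))"

definition SS :: "nat \<Rightarrow> real" where
  "SS p = (if even p
          then 1/2 - pi/4 + (\<Sum>j=1..p div 2. 2 powr (-(2 * real j)) * dirichlet_eta (2 * real j))
          else -1/2 + ln 2 / 2 +
               (\<Sum>j=1..(p - 1) div 2. 2 powr (-(2 * real j + 1)) * dirichlet_eta (2 * real j + 1)))"

lemma g_suc: "(\<lambda>k. (-1)^(Suc k) / real (2*(Suc k)+1)) sums (pi/4 - 1)"
  using sums_Suc_iff[of "\<lambda>k. (-1)^k / real (2*k+1)" "pi/4 - 1"] leib_sums by simp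

lemma base0: "ff 0 sums SS 0"
proof -
  have "(\<lambda>n. (1/2) * (- ((-1)^n / real (2*n+1)) - (-1)^(Suc n) / real (2*(Suc n)+1)))
     sums ((1/2) * (- (pi/4) - (pi/4 - 1)))"
    by (intro sums_mult sums_diff sums_minus leib_sums g_suc)
  moreover have "(\<lambda>n. (1/2) * (- ((-1)^n / real (2*n+1)) - (-1)^(Suc n) / real (2*(Suc n)+1))) = ff 0"
    by (rule ext) (simp add: ff_def field_simps)
  moreover have "(1/2) * (- (pi/4) - (pi/4 - 1)) = SS 0"
    unfolding SS_def by simp
  ultimately show ?thesis by simp
qed

lemma rat1: "(x::real) \<ge> 0 \<Longrightarrow> 1 / ((2*x+1)*(2*x+2)*(2*x+3)) = (1/2)*(1/(2*x+1) + 1/(2*x+3)) - (1/2) * (1/(x+1))"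
proof -
  assume x: "x \<ge> 0"
  have "2*x+1 \<noteq> 0" "2*x+2 \<noteq> 0" "2*x+3 \<noteq> 0" "x+1 \<noteq> 0" using x by auto
  then show ?thesis by (simp add: divide_simps del: add_divide_distrib) (simp add: algebra_simps)
qed

lemma base1: "ff 1 sums SS 1"
proof -
  have "(\<lambda>n. (1/2) * (- ((-1)^n / real (2*n+1)) + (-1)^(Suc n) / real (2*(Suc n)+1))
          + (1/2) * ((-1)^n / real (Suc n)))
     sums ((1/2) * (- (pi/4) + (pi/4 - 1)) + (1/2) * ln 2)"
    by (intro sums_add sums_mult sums_minus leib_sums g_suc alternating_harmonic_series_sums)
  moreover have "(\<lambda>n. (1/2) * (- ((-1)^n / real (2*n+1)) + (-1)^(Suc n) / real (2*(Suc n)+1))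
          + (1/2) * ((-1)^n / real (Suc n))) = ff 1"
  proof
    fix n
    have r: "1 / ((2*real n+1)*(2*real n+2)*(2*real n+3)) = (1/2)*(1/(2*real n+1) + 1/(2*real n+3)) - (1/2) * (1/(real n+1))"
      by (rule rat1) simp
    have "ff 1 n = - ((-1)^n * (1 / ((2*real n+1)*(2*real n+2)*(2*real n+3))))"
    proof -
      have a: "2*real(Suc n) - 1 = 2*real n+1" "2*real(Suc n) = 2*real n+2" "2*real (Suc n)+1 = 2*real n+3" by simp_all
      show ?thesis unfolding ff_def a by (simp add: algebra_simps)
    qed
    also have "\<dots> = (1/2) * (- ((-1)^n / real (2*n+1)) + (-1)^(Suc n) / real (2*(Suc n)+1))
          + (1/2) * ((-1)^n / real (Suc n))"
    proof -
      have a: "real (2*n+1) = 2*real n+1" "real (2*(Suc n)+1) = 2*real n+3" "real (Suc n) = real n + 1" by simp_all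
      show ?thesis unfolding r a by (simp add: algebra_simps)
    qed
    finally show "(1/2) * (- ((-1)^n / real (2*n+1)) + (-1)^(Suc n) / real (2*(Suc n)+1))
          + (1/2) * ((-1)^n / real (Suc n)) = ff 1 n" by simp
  qed
  moreover have "(1/2) * (- (pi/4) + (pi/4 - 1)) + (1/2) * ln 2 = SS 1"
    unfolding SS_def by simp
  ultimately show ?thesis by simp
qed

lemma rat2: "(m::real) > 1 \<Longrightarrow> 1 / ((m - 1) * m^(Suc (Suc p)) * (m+1)) = 1 / ((m - 1) * m^p * (m+1)) - 1 / m^(Suc (Suc p))"
proof -
  assume m: "m > 1"
  have "m^p \<noteq> 0" "m - 1 \<noteq> 0" "m \<noteq> 0" "m + 1 \<noteq> 0" using m by auto
  then show ?thesis using m by (simp add: divide_simps del: add_divide_distrib) (simp add: algebra_simps)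
qed

lemma e2: "(2::real) powr (- real q) = 1 / 2 ^ q"
proof -
  have "(2::real) powr (real q) = 2 ^ q" by (rule powr_realpow) simp
  then show ?thesis by (simp add: powr_minus_divide)
qed

lemma f3: "(-1::real)^Suc n / (2 * real (Suc n))^q = - (1 / 2 ^ q * ((-1)^n / real (Suc n) ^ q))"
  unfolding power_mult_distrib by simp

lemma ffsplit: "ff p n = (-1)^Suc n * (1 / ((2 * real (Suc n) - 1) * (2 * real (Suc n))^p * (2 * real (Suc n)+1)))"
  unfolding ff_def by simp

lemma step_gen:
  assumes q: "q = Suc (Suc p)"
  shows "ff q n = ff p n + 2 powr (- real q) * ((-1)^n / real (Suc n) ^ q)"
proof -
  define m where "m = 2 * real (Suc n)"
  have m1: "m > 1" unfolding m_def by simp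
  have "ff q n = ff p n - (-1)^Suc n / m^q"
    unfolding ffsplit m_def[symmetric] q rat2[OF m1]
    by (simp only: right_diff_distrib times_divide_eq_right mult_1_right)
  then show ?thesis unfolding e2 m_def f3 by simp
qed

lemma step: "ff (Suc (Suc p)) = (\<lambda>n. ff p n + 2 powr (- real (Suc (Suc p))) * ((-1)^n / real (Suc n) ^ (Suc (Suc p))))"
  using step_gen[OF refl] by blast

lemma SS_step: "SS (Suc (Suc p)) = SS p + 2 powr (- real (Suc (Suc p))) * dirichlet_eta (real (Suc (Suc p)))"
proof (cases "even p")
  case True
  then obtain q where p: "p = 2*q" by auto
  have d: "p div 2 = q" "Suc (Suc p) div 2 = Suc q" using p by auto
  have r: "real (Suc (Suc p)) = 2 * real (Suc q)" using p by simp
  have ev: "even (Suc (Suc p))" using True by simp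
  define t where "t j = 2 powr (-(2 * real j)) * dirichlet_eta (2 * real j)" for j
  have tt: "(\<lambda>j. 2 powr (-(2 * real j)) * dirichlet_eta (2 * real j)) = t"
    by (simp add: t_def fun_eq_iff)
  have su: "sum t {1..Suc q} = sum t {1..q} + t (Suc q)" by simp
  show ?thesis unfolding SS_def d if_P[OF True] if_P[OF ev] r tt su
    unfolding t_def by (simp only: add.assoc)
next
  case False
  then obtain q where p: "p = 2*q+1" using oddE by blast
  have d: "(p - 1) div 2 = q" "(Suc (Suc p) - 1) div 2 = Suc q" using p by auto
  have r: "real (Suc (Suc p)) = 2 * real (Suc q) + 1" using p by simp
  have ev: "\<not> even (Suc (Suc p))" using False by simp
  define t where "t j = 2 powr (-(2 * real j + 1)) * dirichlet_eta (2 * real j + 1)" for j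
  have tt: "(\<lambda>j. 2 powr (-(2 * real j + 1)) * dirichlet_eta (2 * real j + 1)) = t"
    by (simp add: t_def fun_eq_iff)
  have su: "sum t {1..Suc q} = sum t {1..q} + t (Suc q)" by simp
  show ?thesis unfolding SS_def d if_not_P[OF False] if_not_P[OF ev] r tt su
    unfolding t_def by (simp only: add.assoc)
qed

lemma main: "ff p sums SS p"
proof (induction p rule: less_induct)
  case (less p)
  show ?case
  proof (cases p)
    case 0 then show ?thesis using base0 by simp
  next
    case (Suc m)
    show ?thesis
    proof (cases m)
      case 0 then show ?thesis using base1 Suc by simp
    next
      case (Suc q)
      have "ff q sums SS q" using less Suc \<open>p = Suc m\<close> by simp
      from sums_add[OF this sums_mult[OF eta_sums[of "Suc (Suc q)"], of "2 powr (- real (Suc (Suc q)))"]]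
      have "ff (Suc (Suc q)) sums SS (Suc (Suc q))" unfolding step SS_step by simp
      then show ?thesis using Suc \<open>p = Suc m\<close> by simp
    qed
  qed
qed

theorem corollary3:
  fixes p :: nat
  shows "(\<lambda>n. (-1) ^ Suc n /
            ((2 * real (Suc n) - 1) * (2 * real (Suc n)) ^ p * (2 * real (Suc n) + 1)))
         sums
         (if even p
          then 1/2 - pi/4 + (\<Sum>j=1..p div 2. 2 powr (-(2 * real j)) * dirichlet_eta (2 * real j))
          else -1/2 + ln 2 / 2 +
               (\<Sum>j=1..(p - 1) div 2. 2 powr (-(2 * real j + 1)) * dirichlet_eta (2 * real j + 1)))"
  using main[of p] unfolding ff_def SS_def .

end
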